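(* Let $H \in \mathrm{Herm}(\mathcal{H})$, $\mathcal{A}$ an ancillary Hilbert space and $H' \in \mathrm{Herm}(\mathcal{H}\otimes\mathcal{A})$. Suppose $(H',\mathcal{A})$ is an $(\eta,\epsilon)$-gadget for $H$ with $U$, $P$ and $P' = U(\mathbb{I}\otimes P)U^\dagger$ as in the definition, where $U$ is the direct rotation between $\mathbb{I}\otimes P$ and $P'$. Assume $\|H'\| \le J'$ and $\|(\mathbb{I}\otimes P)H'(\mathbb{I}\otimes P^\perp)\| \le J_O'$. Then $$\|(\mathbb{I}\otimes P)H'(\mathbb{I}\otimes P)\| \le \|H\| + O(\epsilon + \eta J_O' + \eta^2 J').$$
   Context: $\|\cdot\|$ is the operator norm, $P^\perp = \mathbb{I} - P$. $(H',\mathcal{A})$ is an $(\eta,\epsilon)$-gadget for $H$ if there exist an orthogonal projector $P\neq 0$ on $\mathcal{A}$ and a unitary $U$ on $\mathcal{H}\otimes\mathcal{A}$ with $\|U - \mathbb{I}\| \le \eta$ and $\|P'H'P' - U(H\otimes P)U^\dagger\| \le \epsilon$, where $P' = U(\mathbb{I}\otimes P)U^\dagger$. Direct rotation: for orthogonal projectors $P_1, P_2$ of equal rank with $\|P_1 - P_2\| < 1$, let $R_1 = \mathbb{I} - 2P_1$, $R_2 = \mathbb{I} - 2P_2$; the direct rotation from $P_1$ to $P_2$ is $\sqrt{R_2R_1}$, with the square root taken with branch cut along the negative real axis and $\sqrt{1} = 1$. *)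

theory Defs
  imports "Jordan_Normal_Form.Char_Poly" "Jordan_Normal_Form.DL_Rank"
begin

definition vnorm :: "complex vec \<Rightarrow> real" where
  "vnorm v = sqrt (\<Sum>i<dim_vec v. (cmod (v $ i))^2)"

definition opnorm :: "complex mat \<Rightarrow> real" where
  "opnorm A = Sup {vnorm (A *\<^sub>v v) | v. v \<in> carrier_vec (dim_col A) \<and> vnorm v \<le> 1}"

definition adj :: "complex mat \<Rightarrow> complex mat" where
  "adj A = mat (dim_col A) (dim_row A) (\<lambda>(i,j). cnj (A $$ (j,i)))"

definition hermitian :: "nat \<Rightarrow> complex mat \<Rightarrow> bool" where
  "hermitian n A \<longleftrightarrow> A \<in> carrier_mat n n \<and> adj A = A"

definition unitary :: "nat \<Rightarrow> complex mat \<Rightarrow> bool" where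
  "unitary n U \<longleftrightarrow> U \<in> carrier_mat n n \<and> U * adj U = 1\<^sub>m n \<and> adj U * U = 1\<^sub>m n"

definition orth_proj :: "nat \<Rightarrow> complex mat \<Rightarrow> bool" where
  "orth_proj n P \<longleftrightarrow> hermitian n P \<and> P * P = P"

text \<open>Kronecker (tensor) product; index (i,a) of H\<otimes>A is encoded as i * dim A + a.\<close>
definition kron :: "complex mat \<Rightarrow> complex mat \<Rightarrow> complex mat" where
  "kron A B = mat (dim_row A * dim_row B) (dim_col A * dim_col B)
     (\<lambda>(i,j). A $$ (i div dim_row B, j div dim_col B) * B $$ (i mod dim_row B, j mod dim_col B))"

definition mrank :: "complex mat \<Rightarrow> nat" where
  "mrank A = vec_space.rank (dim_row A) A"

text \<open>Direct rotation from P1 to P2: sqrt(R2 R1), principal branch (cut along the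
  negative real axis, sqrt 1 = 1). The principal square root of a matrix W with no
  eigenvalues on the closed negative real axis is the unique S with S^2 = W all of whose
  eigenvalues lie in the open right half plane.\<close>
definition direct_rotation :: "nat \<Rightarrow> complex mat \<Rightarrow> complex mat \<Rightarrow> complex mat \<Rightarrow> bool" where
  "direct_rotation n P1 P2 U \<longleftrightarrow>
     orth_proj n P1 \<and> orth_proj n P2 \<and> mrank P1 = mrank P2 \<and> opnorm (P1 - P2) < 1 \<and>
     U \<in> carrier_mat n n \<and>
     U * U = (1\<^sub>m n - 2 \<cdot>\<^sub>m P2) * (1\<^sub>m n - 2 \<cdot>\<^sub>m P1) \<and>
     (\<forall>k. eigenvalue U k \<longrightarrow> Re k > 0)"

definition gadget_with :: "nat \<Rightarrow> nat \<Rightarrow> complex mat \<Rightarrow> complex mat \<Rightarrow> real \<Rightarrow> real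
    \<Rightarrow> complex mat \<Rightarrow> complex mat \<Rightarrow> bool" where
  "gadget_with n m H H' \<eta> \<epsilon> P U \<longleftrightarrow>
     orth_proj m P \<and> P \<noteq> 0\<^sub>m m m \<and> unitary (n*m) U \<and>
     opnorm (U - 1\<^sub>m (n*m)) \<le> \<eta> \<and>
     opnorm (U * kron (1\<^sub>m n) P * adj U * H' * (U * kron (1\<^sub>m n) P * adj U)
             - U * kron H P * adj U) \<le> \<epsilon>"

end

theory Submission imports Defs "HOL-Analysis.L2_Norm" begin

section \<open>Vector norm and inner product\<close>

definition ip :: "complex vec \<Rightarrow> complex vec \<Rightarrow> complex" where
  "ip u v = (\<Sum>i<dim_vec v. u $ i * cnj (v $ i))"

lemma vnorm_L2: "vnorm v = L2_set (\<lambda>i. cmod (v $ i)) {..<dim_vec v}"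
  by (simp add: vnorm_def L2_set_def)

lemma vnorm_nonneg: "0 \<le> vnorm v"
  by (simp add: vnorm_def sum_nonneg)

lemma vnorm_sq: "(vnorm v)^2 = (\<Sum>i<dim_vec v. (cmod (v $ i))^2)"
  by (simp add: vnorm_def sum_nonneg)

lemma ip_self: "ip v v = complex_of_real ((vnorm v)^2)"
  unfolding vnorm_sq ip_def of_real_sum
  by (rule sum.cong, simp, metis complex_norm_square of_real_power)

lemma cmod_ip: assumes "dim_vec u = dim_vec v" shows "cmod (ip u v) \<le> vnorm u * vnorm v"
proof -
  have "cmod (ip u v) \<le> (\<Sum>i<dim_vec v. cmod (u $ i * cnj (v $ i)))"
    unfolding ip_def by (rule norm_sum)
  also have "\<dots> = (\<Sum>i<dim_vec v. \<bar>cmod (u $ i)\<bar> * \<bar>cmod (v $ i)\<bar>)"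
    by (simp add: norm_mult)
  also have "\<dots> \<le> L2_set (\<lambda>i. cmod (u $ i)) {..<dim_vec v} * L2_set (\<lambda>i. cmod (v $ i)) {..<dim_vec v}"
    by (rule L2_set_mult_ineq)
  finally show ?thesis using assms by (simp add: vnorm_L2)
qed

lemma vnorm_smult: "vnorm (k \<cdot>\<^sub>v v) = cmod k * vnorm v"
proof -
  have "(vnorm (k \<cdot>\<^sub>v v))^2 = (cmod k * vnorm v)^2"
    unfolding power_mult_distrib vnorm_sq by (simp add: sum_distrib_left norm_mult power_mult_distrib)
  then show ?thesis using vnorm_nonneg
    by (metis norm_ge_zero power2_eq_imp_eq zero_le_mult_iff)
qed

lemma vnorm_zero: "vnorm (0\<^sub>v n) = 0"
  by (simp add: vnorm_def)

lemma vnorm_add: assumes "dim_vec u = dim_vec w" shows "vnorm (u + w) \<le> vnorm u + vnorm w"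
proof -
  have "vnorm (u + w) = L2_set (\<lambda>i. cmod (u $ i + w $ i)) {..<dim_vec w}"
    unfolding vnorm_L2 using assms by (intro L2_set_cong) auto
  also have "\<dots> \<le> L2_set (\<lambda>i. cmod (u $ i) + cmod (w $ i)) {..<dim_vec w}"
    by (intro L2_set_mono) (auto intro: norm_triangle_ineq)
  also have "\<dots> \<le> vnorm u + vnorm w" unfolding vnorm_L2 using assms by (simp add: L2_set_triangle_ineq)
  finally show ?thesis .
qed

lemma vnorm_diff: assumes "dim_vec u = dim_vec w" shows "vnorm (u - w) \<le> vnorm u + vnorm w"
proof -
  have "vnorm (u - w) = L2_set (\<lambda>i. cmod (u $ i - w $ i)) {..<dim_vec w}"
    unfolding vnorm_L2 using assms by (intro L2_set_cong) auto
  also have "\<dots> \<le> L2_set (\<lambda>i. cmod (u $ i) + cmod (w $ i)) {..<dim_vec w}"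
    by (intro L2_set_mono) (auto intro: norm_triangle_ineq4)
  also have "\<dots> \<le> vnorm u + vnorm w" unfolding vnorm_L2 using assms by (simp add: L2_set_triangle_ineq)
  finally show ?thesis .
qed

lemma vnorm_comp: "i < dim_vec v \<Longrightarrow> cmod (v $ i) \<le> vnorm v"
  unfolding vnorm_L2 by (rule member_le_L2_set) auto

lemma ip_adj: assumes A: "A \<in> carrier_mat r c" and v: "v \<in> carrier_vec c" and w: "w \<in> carrier_vec r"
  shows "ip (A *\<^sub>v v) w = ip v (adj A *\<^sub>v w)"
proof -
  have "ip (A *\<^sub>v v) w = (\<Sum>i<r. (\<Sum>j<c. A $$ (i,j) * v $ j) * cnj (w $ i))"
    unfolding ip_def using A v w
    by (intro sum.cong) (auto simp: scalar_prod_def row_def lessThan_atLeast0)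
  also have "\<dots> = (\<Sum>i<r. \<Sum>j<c. A $$ (i,j) * v $ j * cnj (w $ i))"
    by (simp add: sum_distrib_right)
  also have "\<dots> = (\<Sum>j<c. \<Sum>i<r. A $$ (i,j) * v $ j * cnj (w $ i))"
    by (rule sum.swap)
  also have "\<dots> = (\<Sum>j<c. v $ j * cnj (\<Sum>i<r. cnj (A $$ (i,j)) * w $ i))"
    by (simp add: sum_distrib_left mult.commute mult.left_commute)
  also have "\<dots> = ip v (adj A *\<^sub>v w)"
    unfolding ip_def using A v w
    by (intro sum.cong) (auto simp: adj_def scalar_prod_def row_def lessThan_atLeast0)
  finally show ?thesis .
qed

section \<open>Operator norm\<close>

lemma vnorm_mult_bound: assumes "v \<in> carrier_vec (dim_col A)"
  shows "vnorm (A *\<^sub>v v) \<le> (\<Sum>i<dim_row A. \<Sum>j<dim_col A. cmod (A $$ (i,j))) * vnorm v"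
proof -
  have c: "cmod ((A *\<^sub>v v) $ i) \<le> (\<Sum>j<dim_col A. cmod (A $$ (i,j))) * vnorm v" if i: "i < dim_row A" for i
  proof -
    have "cmod ((A *\<^sub>v v) $ i) = cmod (\<Sum>j<dim_col A. A $$ (i,j) * v $ j)"
      using i assms by (auto simp: scalar_prod_def lessThan_atLeast0)
    also have "\<dots> \<le> (\<Sum>j<dim_col A. cmod (A $$ (i,j) * v $ j))" by (rule norm_sum)
    also have "\<dots> \<le> (\<Sum>j<dim_col A. cmod (A $$ (i,j)) * vnorm v)"
      using assms by (intro sum_mono) (auto simp: norm_mult intro!: mult_left_mono vnorm_comp)
    finally show ?thesis by (simp add: sum_distrib_right)
  qed
  have "vnorm (A *\<^sub>v v) \<le> (\<Sum>i<dim_row A. cmod ((A *\<^sub>v v) $ i))"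
    unfolding vnorm_L2 dim_mult_mat_vec by (rule L2_set_le_sum) simp
  also have "\<dots> \<le> (\<Sum>i<dim_row A. (\<Sum>j<dim_col A. cmod (A $$ (i,j))) * vnorm v)"
    by (intro sum_mono c) auto
  finally show ?thesis by (simp add: sum_distrib_right)
qed

definition opset :: "complex mat \<Rightarrow> real set" where
  "opset A = {vnorm (A *\<^sub>v v) | v. v \<in> carrier_vec (dim_col A) \<and> vnorm v \<le> 1}"

lemma opnorm_opset: "opnorm A = Sup (opset A)"
  by (simp add: opnorm_def opset_def)

lemma opset_bdd: "bdd_above (opset A)"
proof -
  let ?K = "(\<Sum>i<dim_row A. \<Sum>j<dim_col A. cmod (A $$ (i,j)))"
  have K: "0 \<le> ?K" by (intro sum_nonneg) auto
  show ?thesis unfolding bdd_above_def opset_def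
  proof (intro exI[of _ ?K] ballI)
    fix x assume "x \<in> {vnorm (A *\<^sub>v v) |v. v \<in> carrier_vec (dim_col A) \<and> vnorm v \<le> 1}"
    then obtain v where v: "v \<in> carrier_vec (dim_col A)" "vnorm v \<le> 1" and x: "x = vnorm (A *\<^sub>v v)" by auto
    have "x \<le> ?K * vnorm v" using vnorm_mult_bound[OF v(1)] x by simp
    also have "\<dots> \<le> ?K" using K v(2) by (simp add: mult_left_le)
    finally show "x \<le> ?K" .
  qed
qed

lemma opset_zero: "0 \<in> opset A"
proof -
  have "A *\<^sub>v 0\<^sub>v (dim_col A) = 0\<^sub>v (dim_row A)" by (intro eq_vecI) auto
  then show ?thesis unfolding opset_def
    by (intro CollectI exI[of _ "0\<^sub>v (dim_col A)"]) (auto simp: vnorm_zero)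
qed

lemma opnorm_nonneg: "0 \<le> opnorm A"
  unfolding opnorm_opset using opset_zero opset_bdd by (rule cSup_upper)

lemma opnorm_bound: assumes v: "v \<in> carrier_vec (dim_col A)"
  shows "vnorm (A *\<^sub>v v) \<le> opnorm A * vnorm v"
proof (cases "vnorm v = 0")
  case True
  have "vnorm (A *\<^sub>v v) \<le> (\<Sum>i<dim_row A. \<Sum>j<dim_col A. cmod (A $$ (i,j))) * vnorm v"
    by (rule vnorm_mult_bound[OF v])
  then show ?thesis using True vnorm_nonneg[of "A *\<^sub>v v"] by simp
next
  case False
  then have pos: "vnorm v > 0" using vnorm_nonneg[of v] by simp
  let ?u = "complex_of_real (1 / vnorm v) \<cdot>\<^sub>v v"
  have u: "?u \<in> carrier_vec (dim_col A)" using v by simp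
  have nu: "vnorm ?u = 1" using pos by (simp add: vnorm_smult norm_divide)
  have Au: "A *\<^sub>v ?u = complex_of_real (1 / vnorm v) \<cdot>\<^sub>v (A *\<^sub>v v)"
    using v by (intro mult_mat_vec[of _ "dim_row A" "dim_col A"]) auto
  have "vnorm (A *\<^sub>v ?u) \<in> opset A" unfolding opset_def using u nu by auto
  then have "vnorm (A *\<^sub>v ?u) \<le> opnorm A" unfolding opnorm_opset using opset_bdd by (rule cSup_upper)
  then have "vnorm (A *\<^sub>v v) / vnorm v \<le> opnorm A" using pos unfolding Au vnorm_smult by (simp add: norm_divide)
  then show ?thesis using pos by (simp add: divide_le_eq mult.commute)
qed

lemma opnorm_le: assumes c: "0 \<le> c" and b: "\<And>v. v \<in> carrier_vec (dim_col A) \<Longrightarrow> vnorm (A *\<^sub>v v) \<le> c * vnorm v"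
  shows "opnorm A \<le> c"
  unfolding opnorm_opset
proof (rule cSup_least)
  show "opset A \<noteq> {}" using opset_zero by auto
  fix x assume "x \<in> opset A"
  then obtain v where v: "v \<in> carrier_vec (dim_col A)" "vnorm v \<le> 1" and x: "x = vnorm (A *\<^sub>v v)"
    unfolding opset_def by auto
  have "x \<le> c * vnorm v" using b[OF v(1)] x by simp
  also have "\<dots> \<le> c" using c v(2) by (simp add: mult_left_le)
  finally show "x \<le> c" .
qed

lemma opnorm_mult: assumes A: "(A::complex mat) \<in> carrier_mat r k" and B: "B \<in> carrier_mat k c"
  shows "opnorm (A * B) \<le> opnorm A * opnorm B"
proof (rule opnorm_le)
  show "0 \<le> opnorm A * opnorm B" by (simp add: opnorm_nonneg)
  fix v :: "complex vec" assume v: "v \<in> carrier_vec (dim_col (A * B))"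
  then have v': "v \<in> carrier_vec c" using B by simp
  have "vnorm ((A * B) *\<^sub>v v) = vnorm (A *\<^sub>v (B *\<^sub>v v))"
    using A B v' by (simp add: assoc_mult_mat_vec)
  also have "\<dots> \<le> opnorm A * vnorm (B *\<^sub>v v)"
    using A B v' by (intro opnorm_bound) auto
  also have "\<dots> \<le> opnorm A * (opnorm B * vnorm v)"
    using A B v' by (intro mult_left_mono opnorm_bound opnorm_nonneg) auto
  finally show "vnorm ((A * B) *\<^sub>v v) \<le> opnorm A * opnorm B * vnorm v" by (simp add: mult.assoc)
qed

lemma opnorm_add: assumes A: "(A::complex mat) \<in> carrier_mat r c" and B: "B \<in> carrier_mat r c"
  shows "opnorm (A + B) \<le> opnorm A + opnorm B"
proof (rule opnorm_le)
  show "0 \<le> opnorm A + opnorm B" by (simp add: opnorm_nonneg)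
  fix v :: "complex vec" assume v: "v \<in> carrier_vec (dim_col (A + B))"
  then have v': "v \<in> carrier_vec c" using B by simp
  have "vnorm ((A + B) *\<^sub>v v) = vnorm (A *\<^sub>v v + B *\<^sub>v v)"
    using A B v' by (simp add: add_mult_distrib_mat_vec)
  also have "\<dots> \<le> vnorm (A *\<^sub>v v) + vnorm (B *\<^sub>v v)" using A B by (intro vnorm_add) auto
  also have "\<dots> \<le> opnorm A * vnorm v + opnorm B * vnorm v"
    using A B v' by (intro add_mono opnorm_bound) auto
  finally show "vnorm ((A + B) *\<^sub>v v) \<le> (opnorm A + opnorm B) * vnorm v" by (simp add: algebra_simps)
qed

lemma opnorm_diff: assumes A: "(A::complex mat) \<in> carrier_mat r c" and B: "B \<in> carrier_mat r c"
  shows "opnorm (A - B) \<le> opnorm A + opnorm B"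
proof (rule opnorm_le)
  show "0 \<le> opnorm A + opnorm B" by (simp add: opnorm_nonneg)
  fix v :: "complex vec" assume v: "v \<in> carrier_vec (dim_col (A - B))"
  then have v': "v \<in> carrier_vec c" using B by simp
  have "vnorm ((A - B) *\<^sub>v v) = vnorm (A *\<^sub>v v - B *\<^sub>v v)"
    using A B v' by (simp add: minus_mult_distrib_mat_vec)
  also have "\<dots> \<le> vnorm (A *\<^sub>v v) + vnorm (B *\<^sub>v v)" using A B by (intro vnorm_diff) auto
  also have "\<dots> \<le> opnorm A * vnorm v + opnorm B * vnorm v"
    using A B v' by (intro add_mono opnorm_bound) auto
  finally show "vnorm ((A - B) *\<^sub>v v) \<le> (opnorm A + opnorm B) * vnorm v" by (simp add: algebra_simps)
qed

lemma opnorm_smult: "opnorm (k \<cdot>\<^sub>m A) \<le> cmod k * opnorm A"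
proof (rule opnorm_le)
  show "0 \<le> cmod k * opnorm A" by (simp add: opnorm_nonneg)
  fix v :: "complex vec" assume v: "v \<in> carrier_vec (dim_col (k \<cdot>\<^sub>m A))"
  have "(k \<cdot>\<^sub>m A) *\<^sub>v v = k \<cdot>\<^sub>v (A *\<^sub>v v)" using v by (intro eq_vecI) (auto simp: scalar_prod_def sum_distrib_left mult.assoc)
  then have "vnorm ((k \<cdot>\<^sub>m A) *\<^sub>v v) = cmod k * vnorm (A *\<^sub>v v)" by (simp add: vnorm_smult)
  also have "\<dots> \<le> cmod k * (opnorm A * vnorm v)" using v by (intro mult_left_mono opnorm_bound) auto
  finally show "vnorm ((k \<cdot>\<^sub>m A) *\<^sub>v v) \<le> cmod k * opnorm A * vnorm v" by (simp add: mult.assoc)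
qed

section \<open>Adjoint\<close>

lemma adj_dims[simp]: "dim_row (adj A) = dim_col A" "dim_col (adj A) = dim_row A"
  by (auto simp: adj_def)

lemma adj_index[simp]: "i < dim_col A \<Longrightarrow> j < dim_row A \<Longrightarrow> adj A $$ (i,j) = cnj (A $$ (j,i))"
  by (simp add: adj_def)

lemma adj_carrier[simp]: "A \<in> carrier_mat r c \<Longrightarrow> adj A \<in> carrier_mat c r"
  unfolding carrier_mat_def adj_def by simp

lemma adj_adj[simp]: "adj (adj A) = A"
  by (intro eq_matI) auto

lemma adj_mult: assumes A: "A \<in> carrier_mat r k" and B: "B \<in> carrier_mat k c"
  shows "adj (A * B) = adj B * adj A"
proof (rule eq_matI)
  fix i j assume i: "i < dim_row (adj B * adj A)" and j: "j < dim_col (adj B * adj A)"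
  have i': "i < c" and j': "j < r" using i j A B by auto
  have "adj (A * B) $$ (i,j) = cnj (\<Sum>l\<in>{0..<k}. A $$ (j,l) * B $$ (l,i))"
    using A B i' j' by (simp add: scalar_prod_def)
  also have "\<dots> = (\<Sum>l\<in>{0..<k}. adj B $$ (i,l) * adj A $$ (l,j))"
    using A B i' j' by (simp add: mult.commute)
  also have "\<dots> = (adj B * adj A) $$ (i,j)"
    using A B i' j' by (simp add: scalar_prod_def)
  finally show "adj (A * B) $$ (i,j) = (adj B * adj A) $$ (i,j)" .
qed (use A B in auto)

lemma adj_minus: assumes A: "A \<in> carrier_mat r c" and B: "B \<in> carrier_mat r c"
  shows "adj (A - B) = adj A - adj B"
  using A B by (intro eq_matI) auto

lemma adj_one[simp]: "adj (1\<^sub>m n) = 1\<^sub>m n"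
  by (intro eq_matI) auto

lemma opnorm_adj_le: assumes A: "A \<in> carrier_mat r c"
  shows "opnorm (adj A) \<le> opnorm A"
proof (rule opnorm_le)
  show "0 \<le> opnorm A" by (rule opnorm_nonneg)
  fix w :: "complex vec" assume w: "w \<in> carrier_vec (dim_col (adj A))"
  then have w': "w \<in> carrier_vec r" using A by simp
  define x where "x = adj A *\<^sub>v w"
  have x: "x \<in> carrier_vec c" unfolding x_def using adj_carrier[OF A] w' by (rule mult_mat_vec_carrier)
  have "complex_of_real ((vnorm x)^2) = ip (A *\<^sub>v x) w"
    using ip_adj[OF A x w'] by (simp add: ip_self x_def)
  then have "(vnorm x)^2 = cmod (ip (A *\<^sub>v x) w)"
    by (metis norm_of_real abs_of_nonneg zero_le_power2)
  also have "\<dots> \<le> vnorm (A *\<^sub>v x) * vnorm w" using A w' by (intro cmod_ip) auto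
  also have "\<dots> \<le> (opnorm A * vnorm x) * vnorm w"
    using A x by (intro mult_right_mono opnorm_bound vnorm_nonneg) auto
  finally have *: "vnorm x * vnorm x \<le> vnorm x * (opnorm A * vnorm w)"
    by (simp add: power2_eq_square algebra_simps)
  show "vnorm (adj A *\<^sub>v w) \<le> opnorm A * vnorm w"
  proof (cases "vnorm x = 0")
    case True then show ?thesis
      by (simp add: x_def[symmetric] opnorm_nonneg vnorm_nonneg)
  next
    case False
    then have "vnorm x > 0" using vnorm_nonneg[of x] by simp
    then show ?thesis using * unfolding x_def by simp
  qed
qed

lemma unitary_norm: assumes U: "U \<in> carrier_mat N N" and UU: "adj U * U = 1\<^sub>m N"
  shows "opnorm U \<le> 1"
proof (rule opnorm_le)
  fix v :: "complex vec" assume v: "v \<in> carrier_vec (dim_col U)"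
  then have v': "v \<in> carrier_vec N" using U by simp
  have "complex_of_real ((vnorm (U *\<^sub>v v))^2) = ip v (adj U *\<^sub>v (U *\<^sub>v v))"
    using ip_adj[OF U v', of "U *\<^sub>v v"] U v' by (simp add: ip_self)
  also have "adj U *\<^sub>v (U *\<^sub>v v) = v"
    using assoc_mult_mat_vec[of "adj U" N N U N v] U v' UU by simp
  finally have "complex_of_real ((vnorm (U *\<^sub>v v))^2) = complex_of_real ((vnorm v)^2)" by (simp only: ip_self)
  then have "(vnorm (U *\<^sub>v v))^2 = (vnorm v)^2" using of_real_eq_iff by blast
  then show "vnorm (U *\<^sub>v v) \<le> 1 * vnorm v"
    using vnorm_nonneg by (simp add: power2_eq_imp_eq)
qed simp

lemma proj_norm: assumes Q: "Q \<in> carrier_mat N N" and h: "adj Q = Q" and QQ: "Q * Q = Q"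
  shows "opnorm Q \<le> 1"
proof (rule opnorm_le)
  fix v :: "complex vec" assume v: "v \<in> carrier_vec (dim_col Q)"
  then have v': "v \<in> carrier_vec N" using Q by simp
  have "complex_of_real ((vnorm (Q *\<^sub>v v))^2) = ip v (adj Q *\<^sub>v (Q *\<^sub>v v))"
    using ip_adj[OF Q v', of "Q *\<^sub>v v"] Q v' by (simp add: ip_self)
  also have "adj Q *\<^sub>v (Q *\<^sub>v v) = Q *\<^sub>v v"
    using assoc_mult_mat_vec[of Q N N Q N v] Q v' QQ h by simp
  finally have "(vnorm (Q *\<^sub>v v))^2 = cmod (ip v (Q *\<^sub>v v))"
    by (metis norm_of_real abs_of_nonneg zero_le_power2)
  also have "\<dots> \<le> vnorm v * vnorm (Q *\<^sub>v v)" using Q v' by (intro cmod_ip) auto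
  finally have *: "vnorm (Q *\<^sub>v v) * vnorm (Q *\<^sub>v v) \<le> vnorm (Q *\<^sub>v v) * vnorm v"
    by (simp add: power2_eq_square algebra_simps)
  show "vnorm (Q *\<^sub>v v) \<le> 1 * vnorm v"
  proof (cases "vnorm (Q *\<^sub>v v) = 0")
    case True then show ?thesis by (simp add: vnorm_nonneg)
  next
    case False
    then have "vnorm (Q *\<^sub>v v) > 0" using vnorm_nonneg[of "Q *\<^sub>v v"] by simp
    then show ?thesis using * by simp
  qed
qed simp

section \<open>Kronecker products\<close>

lemma sum_shift_lt: "sum f {a..<a+(m::nat)} = (\<Sum>b<m. f (a + b))"
  using sum.shift_bounds_nat_ivl[of f 0 a m] by (simp add: add.commute lessThan_atLeast0)

lemma sum_split: "(\<Sum>k<n*(m::nat). f k) = (\<Sum>a<n. \<Sum>b<m. f (a*m+b))"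
proof -
  have "sum f {..<n*m} = (\<Sum>a<n. sum f {a*m..<a*m+m})" by (rule sum.nat_group[symmetric])
  then show ?thesis by (simp add: sum_shift_lt)
qed

lemma div_lt: "i < n * m \<Longrightarrow> i div m < (n::nat)"
  by (simp add: less_mult_imp_div_less)

lemma mod_lt: "i < n * m \<Longrightarrow> i mod m < (m::nat)"
  by (metis mod_less_divisor mult_0_right not_less_zero gr0I)

lemma kron_dims[simp]: "dim_row (kron A B) = dim_row A * dim_row B" "dim_col (kron A B) = dim_col A * dim_col B"
  by (auto simp: kron_def)

lemma kron_index[simp]: "i < dim_row A * dim_row B \<Longrightarrow> j < dim_col A * dim_col B \<Longrightarrow>
  kron A B $$ (i,j) = A $$ (i div dim_row B, j div dim_col B) * B $$ (i mod dim_row B, j mod dim_col B)"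
  by (simp add: kron_def)

lemma kron_carrier[simp]: "A \<in> carrier_mat n n \<Longrightarrow> B \<in> carrier_mat m m \<Longrightarrow> kron A B \<in> carrier_mat (n*m) (n*m)"
  unfolding carrier_mat_def by simp

lemma kron_mult: assumes A: "A \<in> carrier_mat n n" and B: "B \<in> carrier_mat m m"
  and C: "C \<in> carrier_mat n n" and D: "D \<in> carrier_mat m m"
  shows "kron A B * kron C D = kron (A * C) (B * D)"
proof (rule eq_matI)
  fix i j assume i: "i < dim_row (kron (A * C) (B * D))" and j: "j < dim_col (kron (A * C) (B * D))"
  have i': "i < n*m" and j': "j < n*m" using i j A B C D by auto
  have "(kron A B * kron C D) $$ (i,j) = (\<Sum>k<n*m. kron A B $$ (i,k) * kron C D $$ (k,j))"
    using A B C D i' j' by (simp add: scalar_prod_def lessThan_atLeast0)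
  also have "\<dots> = (\<Sum>a<n. \<Sum>b<m. kron A B $$ (i,a*m+b) * kron C D $$ (a*m+b,j))"
    by (rule sum_split)
  also have "\<dots> = (\<Sum>a<n. \<Sum>b<m. (A $$ (i div m, a) * C $$ (a, j div m)) * (B $$ (i mod m, b) * D $$ (b, j mod m)))"
  proof (intro sum.cong refl)
    fix a b assume a: "a \<in> {..<n}" and b: "b \<in> {..<m}"
    have "a*m+b < Suc a * m" using b by simp
    also have "\<dots> \<le> n*m" using a by (intro mult_le_mono1) simp
    finally have ab: "a*m+b < n*m" .
    have d: "(a*m+b) div m = a" "(a*m+b) mod m = b" using b by auto
    show "kron A B $$ (i,a*m+b) * kron C D $$ (a*m+b,j) = (A $$ (i div m, a) * C $$ (a, j div m)) * (B $$ (i mod m, b) * D $$ (b, j mod m))"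
      using A B C D i' j' ab d by simp
  qed
  also have "\<dots> = (\<Sum>a<n. A $$ (i div m, a) * C $$ (a, j div m)) * (\<Sum>b<m. B $$ (i mod m, b) * D $$ (b, j mod m))"
    by (simp add: sum_product)
  also have "\<dots> = kron (A * C) (B * D) $$ (i,j)"
    using A B C D i' j' div_lt[OF i'] div_lt[OF j'] mod_lt[OF i'] mod_lt[OF j']
    by (simp add: scalar_prod_def lessThan_atLeast0)
  finally show "(kron A B * kron C D) $$ (i,j) = kron (A * C) (B * D) $$ (i,j)" .
qed (use A B C D in auto)

lemma kron_one: "kron (1\<^sub>m n) (1\<^sub>m m) = 1\<^sub>m (n*m)"
proof (rule eq_matI)
  fix i j assume i: "i < dim_row (1\<^sub>m (n*m))" and j: "j < dim_col (1\<^sub>m (n*m))"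
  then have i': "i < n*m" and j': "j < n*m" by auto
  have "(i div m = j div m \<and> i mod m = j mod m) = (i = j)"
    by (metis div_mult_mod_eq)
  then show "kron (1\<^sub>m n) (1\<^sub>m m) $$ (i,j) = 1\<^sub>m (n*m) $$ (i,j)"
    using i' j' div_lt[OF i'] div_lt[OF j'] mod_lt[OF i'] mod_lt[OF j'] by auto
qed auto

lemma kron_minus: assumes A: "A \<in> carrier_mat n n" and B: "B \<in> carrier_mat m m" and C: "C \<in> carrier_mat m m"
  shows "kron A (B - C) = kron A B - kron A C"
proof (rule eq_matI)
  fix i j assume i: "i < dim_row (kron A B - kron A C)" and j: "j < dim_col (kron A B - kron A C)"
  then have i': "i < n*m" and j': "j < n*m" using A B C by auto
  show "kron A (B - C) $$ (i,j) = (kron A B - kron A C) $$ (i,j)"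
    using A B C i' j' mod_lt[OF i'] mod_lt[OF j'] by (simp add: algebra_simps)
qed (use A B C in auto)

lemma adj_kron: assumes A: "A \<in> carrier_mat n n" and B: "B \<in> carrier_mat m m"
  shows "adj (kron A B) = kron (adj A) (adj B)"
proof (rule eq_matI)
  fix i j assume i: "i < dim_row (kron (adj A) (adj B))" and j: "j < dim_col (kron (adj A) (adj B))"
  then have i': "i < n*m" and j': "j < n*m" using A B by auto
  show "adj (kron A B) $$ (i,j) = kron (adj A) (adj B) $$ (i,j)"
    using A B i' j' mod_lt[OF i'] mod_lt[OF j'] div_lt[OF i'] div_lt[OF j'] by simp
qed (use A B in auto)

lemma kron_H_norm: assumes H: "H \<in> carrier_mat n n"
  shows "opnorm (kron H (1\<^sub>m m)) \<le> opnorm H"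
proof (rule opnorm_le[OF opnorm_nonneg])
  fix v :: "complex vec" assume "v \<in> carrier_vec (dim_col (kron H (1\<^sub>m m)))"
  then have v: "v \<in> carrier_vec (n*m)" using H by simp
  define w where "w a = vec n (\<lambda>j. v $ (j*m+a))" for a
  have w: "w a \<in> carrier_vec n" for a by (simp add: w_def)
  have ab: "a*m+b < n*m" if a: "a < n" and b: "b < m" for a b
  proof -
    have "a*m+b < Suc a * m" using b by simp
    also have "\<dots> \<le> n*m" using a by (intro mult_le_mono1) simp
    finally show ?thesis .
  qed
  have d: "(a*m+b) div m = a" "(a*m+b) mod m = b" if "b < m" for a b :: nat using that by auto
  have c1: "(kron H (1\<^sub>m m) *\<^sub>v v) $ (i*m+a) = (H *\<^sub>v w a) $ i" if i: "i < n" and a: "a < m" for i a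
  proof -
    have "(kron H (1\<^sub>m m) *\<^sub>v v) $ (i*m+a) = (\<Sum>k<n*m. kron H (1\<^sub>m m) $$ (i*m+a, k) * v $ k)"
      using H v ab[OF i a] by (simp add: scalar_prod_def lessThan_atLeast0)
    also have "\<dots> = (\<Sum>j<n. \<Sum>b<m. kron H (1\<^sub>m m) $$ (i*m+a, j*m+b) * v $ (j*m+b))"
      by (rule sum_split)
    also have "\<dots> = (\<Sum>j<n. \<Sum>b<m. (if b = a then H $$ (i,j) * v $ (j*m+b) else 0))"
      using H ab[OF i a] ab d a by (intro sum.cong refl) auto
    also have "\<dots> = (\<Sum>j<n. H $$ (i,j) * v $ (j*m+a))"
      using a by simp
    also have "\<dots> = (H *\<^sub>v w a) $ i"
      using H i by (simp add: scalar_prod_def lessThan_atLeast0 w_def)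
    finally show ?thesis .
  qed
  have "(vnorm (kron H (1\<^sub>m m) *\<^sub>v v))^2 = (\<Sum>k<n*m. (cmod ((kron H (1\<^sub>m m) *\<^sub>v v) $ k))^2)"
    using H by (simp add: vnorm_sq)
  also have "\<dots> = (\<Sum>i<n. \<Sum>a<m. (cmod ((kron H (1\<^sub>m m) *\<^sub>v v) $ (i*m+a)))^2)"
    by (rule sum_split)
  also have "\<dots> = (\<Sum>i<n. \<Sum>a<m. (cmod ((H *\<^sub>v w a) $ i))^2)"
    using c1 by (intro sum.cong refl) auto
  also have "\<dots> = (\<Sum>a<m. \<Sum>i<n. (cmod ((H *\<^sub>v w a) $ i))^2)"
    by (rule sum.swap)
  also have "\<dots> = (\<Sum>a<m. (vnorm (H *\<^sub>v w a))^2)"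
    using H by (simp add: vnorm_sq)
  also have "\<dots> \<le> (\<Sum>a<m. (opnorm H * vnorm (w a))^2)"
  proof (intro sum_mono power_mono)
    fix a show "vnorm (H *\<^sub>v w a) \<le> opnorm H * vnorm (w a)"
      using H w by (intro opnorm_bound) auto
  qed (rule vnorm_nonneg)
  also have "\<dots> = (opnorm H)^2 * (\<Sum>a<m. (vnorm (w a))^2)"
    by (simp add: power_mult_distrib sum_distrib_left)
  also have "(\<Sum>a<m. (vnorm (w a))^2) = (\<Sum>a<m. \<Sum>j<n. (cmod (v $ (j*m+a)))^2)"
    by (simp add: vnorm_sq w_def)
  also have "\<dots> = (\<Sum>j<n. \<Sum>a<m. (cmod (v $ (j*m+a)))^2)"
    by (rule sum.swap)
  also have "\<dots> = (\<Sum>k<n*m. (cmod (v $ k))^2)"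
    by (rule sum_split[symmetric])
  also have "\<dots> = (vnorm v)^2"
    using v by (simp add: vnorm_sq)
  finally have "(vnorm (kron H (1\<^sub>m m) *\<^sub>v v))^2 \<le> (opnorm H * vnorm v)^2"
    by (simp add: power_mult_distrib)
  then show "vnorm (kron H (1\<^sub>m m) *\<^sub>v v) \<le> opnorm H * vnorm v"
    by (rule power2_le_imp_le) (simp add: opnorm_nonneg vnorm_nonneg)
qed

lemma sq_assoc: "(A::complex mat) \<in> carrier_mat N N \<Longrightarrow> B \<in> carrier_mat N N \<Longrightarrow> C \<in> carrier_mat N N \<Longrightarrow> A*B*C = A*(B*C)"
  by (rule assoc_mult_mat) auto
lemma sq_distl: "(A::complex mat) \<in> carrier_mat N N \<Longrightarrow> B \<in> carrier_mat N N \<Longrightarrow> C \<in> carrier_mat N N \<Longrightarrow> A*(B+C) = A*B+A*C"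
  by (rule mult_add_distrib_mat) auto
lemma sq_distr: "(A::complex mat) \<in> carrier_mat N N \<Longrightarrow> B \<in> carrier_mat N N \<Longrightarrow> C \<in> carrier_mat N N \<Longrightarrow> (B+C)*A = B*A+C*A"
  by (rule add_mult_distrib_mat) auto
lemma sq_add_assoc: "(A::complex mat) \<in> carrier_mat N N \<Longrightarrow> B \<in> carrier_mat N N \<Longrightarrow> C \<in> carrier_mat N N \<Longrightarrow> (A+B)+C = A+(B+C)"
  by (rule assoc_add_mat) auto

lemma sq_mult_carrier[simp]: "(A::complex mat) \<in> carrier_mat N N \<Longrightarrow> B \<in> carrier_mat N N \<Longrightarrow> A*B \<in> carrier_mat N N"
  by (rule mult_carrier_mat)

lemma sq_right_one[simp]: "(A::complex mat) \<in> carrier_mat N N \<Longrightarrow> A * 1\<^sub>m N = A"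
  by (rule right_mult_one_mat)

lemma sq_left_one[simp]: "(A::complex mat) \<in> carrier_mat N N \<Longrightarrow> 1\<^sub>m N * A = A"
  by (rule left_mult_one_mat)

lemma expand4: fixes Q A H B :: "complex mat"
  assumes [simp]: "Q \<in> carrier_mat N N" "A \<in> carrier_mat N N" "H \<in> carrier_mat N N" "B \<in> carrier_mat N N"
  shows "Q*(1\<^sub>m N+A)*H*(1\<^sub>m N+B)*Q = Q*H*Q + Q*A*H*Q + Q*H*B*Q + Q*A*H*B*Q"
proof -
  have "Q*(1\<^sub>m N+A) = Q + Q*A" by (simp add: sq_distl[where N=N] right_mult_one_mat[of Q N N])
  moreover have "(Q + Q*A)*H = Q*H + Q*A*H" by (simp add: sq_distr[where N=N])
  moreover have "(Q*H + Q*A*H)*(1\<^sub>m N+B) = Q*H + Q*A*H + (Q*H*B + Q*A*H*B)"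
    by (simp add: sq_distr[where N=N] sq_distl[where N=N])
  moreover have "(Q*H + Q*A*H + (Q*H*B + Q*A*H*B))*Q = Q*H*Q + Q*A*H*Q + (Q*H*B*Q + Q*A*H*B*Q)"
    by (simp add: sq_distr[where N=N])
  ultimately have e: "Q*(1\<^sub>m N+A)*H*(1\<^sub>m N+B)*Q = Q*H*Q + Q*A*H*Q + (Q*H*B*Q + Q*A*H*B*Q)" by simp
  show ?thesis unfolding e by (simp add: sq_add_assoc[where N=N])
qed

lemma expand_mid: fixes Q A R B :: "complex mat"
  assumes [simp]: "A \<in> carrier_mat N N" "B \<in> carrier_mat N N" "Q \<in> carrier_mat N N" "R \<in> carrier_mat N N"
  and QR: "Q + R = 1\<^sub>m N"
  shows "A*B = A*Q*B + A*R*B"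
proof -
  have "A*B = A*(Q+R)*B" using QR right_mult_one_mat[of A N N] by simp
  also have "\<dots> = A*Q*B + A*R*B" by (simp add: sq_distl[where N=N] sq_distr[where N=N])
  finally show ?thesis .
qed

lemma opnorm_mult_le: fixes A B :: "complex mat" assumes A: "A \<in> carrier_mat N N" and B: "B \<in> carrier_mat N N"
  and a: "opnorm A \<le> a" and b: "opnorm B \<le> b"
  shows "opnorm (A*B) \<le> a*b"
proof -
  have "opnorm (A*B) \<le> opnorm A * opnorm B" by (rule opnorm_mult[OF A B])
  also have "\<dots> \<le> a * b" using a b opnorm_nonneg[of A] opnorm_nonneg[of B]
    by (intro mult_mono) auto
  finally show ?thesis .
qed

lemma opnorm_sum4: fixes X M A B C :: "complex mat" assumes [simp]: "X \<in> carrier_mat N N" "M \<in> carrier_mat N N" "A \<in> carrier_mat N N"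
  "B \<in> carrier_mat N N" "C \<in> carrier_mat N N" and e: "X = M + A + B + C"
  shows "opnorm M \<le> opnorm X + opnorm A + opnorm B + opnorm C"
proof -
  have "M = X - A - B - C"
  proof (rule eq_matI)
    fix i j assume "i < dim_row (X - A - B - C)" "j < dim_col (X - A - B - C)"
    then have ij: "i < N" "j < N" using carrier_matD[OF assms(5)] by auto
    have "X $$ (i,j) = M $$ (i,j) + A $$ (i,j) + B $$ (i,j) + C $$ (i,j)"
      using e ij carrier_matD[OF assms(2)] carrier_matD[OF assms(3)] carrier_matD[OF assms(4)] carrier_matD[OF assms(5)] by simp
    then show "M $$ (i,j) = (X - A - B - C) $$ (i,j)"
      using ij carrier_matD[OF assms(1)] carrier_matD[OF assms(3)] carrier_matD[OF assms(4)] carrier_matD[OF assms(5)] by simp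
  qed (use carrier_matD[OF assms(2)] carrier_matD[OF assms(5)] in auto)
  then have "opnorm M = opnorm (X - A - B - C)" by simp
  also have "\<dots> \<le> opnorm (X - A - B) + opnorm C" by (rule opnorm_diff[of _ N N]) (auto intro: minus_carrier_mat)
  also have "opnorm (X - A - B) \<le> opnorm (X - A) + opnorm B" by (rule opnorm_diff[of _ N N]) (auto intro: minus_carrier_mat)
  also have "opnorm (X - A) \<le> opnorm X + opnorm A" by (rule opnorm_diff[of _ N N]) auto
  finally show ?thesis by simp
qed

lemma opnorm_tri2: fixes A B :: "complex mat" assumes [simp]: "A \<in> carrier_mat r c" "B \<in> carrier_mat r c"
  shows "opnorm A \<le> opnorm (A - B) + opnorm B"
proof -
  have "A = (A - B) + B" using carrier_matD[OF assms(1)] carrier_matD[OF assms(2)] by (intro eq_matI) auto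
  then have "opnorm A = opnorm ((A - B) + B)" by simp
  also have "\<dots> \<le> opnorm (A - B) + opnorm B" by (rule opnorm_add[of _ r c]) (auto intro: minus_carrier_mat)
  finally show ?thesis .
qed

lemma sq_mult_minus: "(A::complex mat) \<in> carrier_mat N N \<Longrightarrow> B \<in> carrier_mat N N \<Longrightarrow> C \<in> carrier_mat N N \<Longrightarrow> A*(B-C) = A*B-A*C"
  by (rule mult_minus_distrib_mat) auto
lemma sq_minus_mult: "(A::complex mat) \<in> carrier_mat N N \<Longrightarrow> B \<in> carrier_mat N N \<Longrightarrow> C \<in> carrier_mat N N \<Longrightarrow> (B-C)*A = B*A-C*A"
  by (rule minus_mult_distrib_mat) auto
lemma sq_mult_smult: "(A::complex mat) \<in> carrier_mat N N \<Longrightarrow> B \<in> carrier_mat N N \<Longrightarrow> A*(k \<cdot>\<^sub>m B) = k \<cdot>\<^sub>m (A*B)"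
  by (rule mult_smult_distrib) auto
lemma sq_smult_mult: "(A::complex mat) \<in> carrier_mat N N \<Longrightarrow> B \<in> carrier_mat N N \<Longrightarrow> (k \<cdot>\<^sub>m A)*B = k \<cdot>\<^sub>m (A*B)"
  by (rule mult_smult_assoc_mat) auto

theorem lemma14:
  "\<exists>C::real. \<forall>(n::nat) (m::nat) H H' P U \<eta> \<epsilon> J' JO'.
     hermitian n H \<longrightarrow> hermitian (n*m) H' \<longrightarrow>
     gadget_with n m H H' \<eta> \<epsilon> P U \<longrightarrow>
     direct_rotation (n*m) (kron (1\<^sub>m n) P) (U * kron (1\<^sub>m n) P * adj U) U \<longrightarrow>
     opnorm H' \<le> J' \<longrightarrow>
     opnorm (kron (1\<^sub>m n) P * H' * kron (1\<^sub>m n) (1\<^sub>m m - P)) \<le> JO' \<longrightarrow>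
     opnorm (kron (1\<^sub>m n) P * H' * kron (1\<^sub>m n) P)
       \<le> opnorm H + C * (\<epsilon> + \<eta> * JO' + \<eta>^2 * J')"
proof (intro exI[of _ 2] allI impI)
  fix n m :: nat and H H' P U :: "complex mat" and \<eta> \<epsilon> J' JO' :: real
  assume hH: "hermitian n H" and hH': "hermitian (n*m) H'" and g: "gadget_with n m H H' \<eta> \<epsilon> P U"
    and dr: "direct_rotation (n*m) (kron (1\<^sub>m n) P) (U * kron (1\<^sub>m n) P * adj U) U"
    and J: "opnorm H' \<le> J'"
    and JO: "opnorm (kron (1\<^sub>m n) P * H' * kron (1\<^sub>m n) (1\<^sub>m m - P)) \<le> JO'"
  define N where "N = n*m"
  define Q where "Q = kron (1\<^sub>m n) P"
  define Qp where "Qp = kron (1\<^sub>m n) (1\<^sub>m m - P)"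
  define Ua where "Ua = adj U"
  define E where "E = U - 1\<^sub>m N"
  define Ea where "Ea = Ua - 1\<^sub>m N"
  have P[simp]: "P \<in> carrier_mat m m" and Ph: "adj P = P" and PP: "P * P = P"
    using g unfolding gadget_with_def orth_proj_def hermitian_def by auto
  have H[simp]: "H \<in> carrier_mat n n" using hH unfolding hermitian_def by auto
  have H'[simp]: "H' \<in> carrier_mat N N" and H'h: "adj H' = H'" using hH' unfolding hermitian_def N_def by auto
  have U[simp]: "U \<in> carrier_mat N N" and UUa: "U * Ua = 1\<^sub>m N" and UaU: "Ua * U = 1\<^sub>m N"
    using g unfolding gadget_with_def unitary_def N_def Ua_def by auto
  have Ua[simp]: "Ua \<in> carrier_mat N N" unfolding Ua_def by simp
  have nE: "opnorm E \<le> \<eta>" using g unfolding gadget_with_def E_def N_def by auto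
  have eps: "opnorm (U*Q*Ua*H'*(U*Q*Ua) - U*kron H P*Ua) \<le> \<epsilon>"
    using g unfolding gadget_with_def Q_def Ua_def by auto
  have rot: "U*U = (1\<^sub>m N - 2 \<cdot>\<^sub>m (U*Q*Ua)) * (1\<^sub>m N - 2 \<cdot>\<^sub>m Q)"
    using dr unfolding direct_rotation_def Q_def Ua_def N_def by auto
  have Q[simp]: "Q \<in> carrier_mat N N" unfolding Q_def N_def by simp
  have Qh: "adj Q = Q" unfolding Q_def using adj_kron[of "1\<^sub>m n" n P m] Ph by simp
  have QQ: "Q * Q = Q" unfolding Q_def using kron_mult[of "1\<^sub>m n" n P m "1\<^sub>m n" P] PP by simp
  have Qp_eq: "Qp = 1\<^sub>m N - Q" unfolding Qp_def Q_def N_def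
    using kron_minus[of "1\<^sub>m n" n "1\<^sub>m m" m P] kron_one[of n m] by simp
  have Qp[simp]: "Qp \<in> carrier_mat N N" unfolding Qp_eq by (simp add: minus_carrier_mat)
  have E[simp]: "E \<in> carrier_mat N N" unfolding E_def by (simp add: minus_carrier_mat)
  have Ea[simp]: "Ea \<in> carrier_mat N N" unfolding Ea_def by (simp add: minus_carrier_mat)
  note dims = carrier_matD[OF Q] carrier_matD[OF Qp] carrier_matD[OF U] carrier_matD[OF Ua]
    carrier_matD[OF H'] carrier_matD[OF E] carrier_matD[OF Ea]
  have QQp: "Q + Qp = 1\<^sub>m N" unfolding Qp_eq using dims by (intro eq_matI) auto
  have Qph: "adj Qp = Qp" unfolding Qp_eq using adj_minus[of "1\<^sub>m N" N N Q] Qh by simp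
  have EaE: "Ea = adj E" unfolding E_def Ea_def Ua_def using adj_minus[of U N N "1\<^sub>m N"] by simp
  have nQ: "opnorm Q \<le> 1" by (rule proj_norm[OF Q Qh QQ])
  have nU: "opnorm U \<le> 1" by (rule unitary_norm[OF U]) (simp add: UaU[unfolded Ua_def])
  have nUa: "opnorm Ua \<le> 1" by (rule unitary_norm[OF Ua]) (simp add: UUa[unfolded Ua_def] Ua_def)
  have nEa: "opnorm Ea \<le> \<eta>" unfolding EaE using opnorm_adj_le[OF E] nE by simp
  have eta0: "0 \<le> \<eta>" using nE opnorm_nonneg[of E] by simp
  have J0: "0 \<le> J'" using J opnorm_nonneg[of H'] by simp
  have eps0: "0 \<le> \<epsilon>" by (rule order.trans[OF opnorm_nonneg eps])
  have JO0: "0 \<le> JO'" by (rule order.trans[OF opnorm_nonneg JO])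
  note sqs = sq_assoc[where N=N] sq_distl[where N=N] sq_distr[where N=N] sq_mult_minus[where N=N]
    sq_minus_mult[where N=N] sq_mult_smult[where N=N] sq_smult_mult[where N=N]
  have UaUZ: "Ua * (U * Z) = Z" if "Z \<in> carrier_mat N N" for Z
    using that sq_assoc[where N=N, of Ua U Z] UaU by simp
  define X where "X = Q*Ua*H'*U*Q"
  have X[simp]: "X \<in> carrier_mat N N" unfolding X_def by simp
  have Xeq: "X = Ua*(U*Q*Ua*H'*(U*Q*Ua))*U"
    unfolding X_def by (simp add: sq_assoc[where N=N] UaUZ UaU)
  define K where "K = kron H P"
  have K[simp]: "K \<in> carrier_mat N N" unfolding K_def N_def by simp
  have Keq: "K = kron H (1\<^sub>m m) * kron (1\<^sub>m n) P"
    unfolding K_def using kron_mult[of H n "1\<^sub>m m" m "1\<^sub>m n" P] by simp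
  have nK: "opnorm K \<le> opnorm H * 1"
    unfolding Keq N_def by (rule opnorm_mult_le[where N="n*m"]) (auto simp: kron_H_norm[OF H] proj_norm[OF Q[unfolded Q_def N_def] Qh[unfolded Q_def] QQ[unfolded Q_def]])
  define Y where "Y = U*Q*Ua*H'*(U*Q*Ua)"
  have Y[simp]: "Y \<in> carrier_mat N N" unfolding Y_def by simp
  have nY: "opnorm Y \<le> \<epsilon> + opnorm H"
  proof -
    have "opnorm Y \<le> opnorm (Y - U*K*Ua) + opnorm (U*K*Ua)" by (rule opnorm_tri2[of _ N N]) auto
    also have "opnorm (U*K*Ua) \<le> 1 * opnorm H * 1"
      using nU nK nUa by (intro opnorm_mult_le[where N=N]) auto
    finally show ?thesis using eps unfolding Y_def K_def by simp
  qed
  have nX: "opnorm X \<le> opnorm H + \<epsilon>"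
  proof -
    have "opnorm X \<le> 1 * (\<epsilon> + opnorm H) * 1"
      unfolding Xeq Y_def[symmetric] using nU nY nUa by (intro opnorm_mult_le[where N=N]) auto
    then show ?thesis by simp
  qed
  \<comment> \<open>Part (b): direct rotation makes the diagonal block of U hermitian\<close>
  define R1 where "R1 = 1\<^sub>m N - 2 \<cdot>\<^sub>m Q"
  have R1[simp]: "R1 \<in> carrier_mat N N" unfolding R1_def by (simp add: minus_carrier_mat)
  have R2eq: "1\<^sub>m N - 2 \<cdot>\<^sub>m (U*Q*Ua) = U*R1*Ua"
  proof -
    have "U*R1*Ua = U*Ua - 2 \<cdot>\<^sub>m (U*Q*Ua)"
      unfolding R1_def by (simp add: sqs minus_carrier_mat)
    then show ?thesis using UUa by simp
  qed
  have Ueq: "U = R1*Ua*R1"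
  proof -
    have "U = Ua*(U*U)" using UaUZ[of U] by simp
    also have "U*U = U*R1*Ua*R1" using rot R2eq unfolding R1_def by simp
    also have "Ua*(U*R1*Ua*R1) = Ua*(U*(R1*Ua*R1))" by (simp add: sq_assoc[where N=N])
    also have "\<dots> = R1*Ua*R1" by (simp add: UaUZ)
    finally show ?thesis .
  qed
  have QR1: "Q*R1 = (-1) \<cdot>\<^sub>m Q"
  proof -
    have "Q*R1 = Q - 2 \<cdot>\<^sub>m Q" unfolding R1_def by (simp add: sqs QQ)
    also have "\<dots> = (-1) \<cdot>\<^sub>m Q" using dims by (intro eq_matI) auto
    finally show ?thesis .
  qed
  have R1Q: "R1*Q = (-1) \<cdot>\<^sub>m Q"
  proof -
    have "R1*Q = Q - 2 \<cdot>\<^sub>m Q" unfolding R1_def by (simp add: sqs QQ)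
    also have "\<dots> = (-1) \<cdot>\<^sub>m Q" using dims by (intro eq_matI) auto
    finally show ?thesis .
  qed
  have QUQ: "Q*U*Q = Q*Ua*Q"
  proof -
    have "Q*U*Q = (Q*R1)*Ua*(R1*Q)"
      by (subst Ueq) (simp add: sq_assoc[where N=N])
    also have "\<dots> = (-1) \<cdot>\<^sub>m ((-1) \<cdot>\<^sub>m (Q*Ua*Q))" unfolding QR1 R1Q by (simp add: sqs)
    also have "\<dots> = Q*Ua*Q" using dims by (intro eq_matI) auto
    finally show ?thesis .
  qed
  have QEaQ: "Q*Ea*Q = Q*Ua*Q - Q" unfolding Ea_def by (simp add: sqs QQ)
  have QEQ: "Q*E*Q = Q*Ea*Q" unfolding QEaQ unfolding E_def by (simp add: sqs QQ QUQ[unfolded sq_assoc[OF Q U Q]])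
  have EaE: "Ea*E = (1\<^sub>m N - U) + (1\<^sub>m N - Ua)"
  proof -
    have "Ea*E = Ua*U - U - (Ua - 1\<^sub>m N)" unfolding Ea_def E_def by (simp add: sqs minus_carrier_mat)
    also have "\<dots> = (1\<^sub>m N - U) + (1\<^sub>m N - Ua)" unfolding UaU using dims by (intro eq_matI) auto
    finally show ?thesis .
  qed
  have QEaEQ: "Q*Ea*E*Q = (-2) \<cdot>\<^sub>m (Q*Ea*Q)"
  proof -
    have "Q*Ea*E*Q = Q*(Ea*E)*Q" by (simp add: sq_assoc[where N=N])
    also have "\<dots> = (Q - Q*U*Q) + (Q - Q*Ua*Q)" unfolding EaE by (simp add: sqs QQ minus_carrier_mat)
    also have "\<dots> = (-2) \<cdot>\<^sub>m (Q*Ea*Q)" unfolding QEaQ QUQ using dims by (intro eq_matI) auto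
    finally show ?thesis .
  qed
  have QEaQ2: "Q*Ea*Q = (-1/2) \<cdot>\<^sub>m (Q*Ea*E*Q)"
    unfolding QEaEQ using dims by (intro eq_matI) auto
  have nD: "opnorm (Q*Ea*Q) \<le> \<eta>^2/2"
  proof -
    have "opnorm (Q*Ea*E*Q) \<le> 1*\<eta>*\<eta>*1"
      using nQ nEa nE by (intro opnorm_mult_le[where N=N]) auto
    then have "opnorm (Q*Ea*Q) \<le> cmod (-1/2) * (1*\<eta>*\<eta>*1)"
      unfolding QEaQ2 using opnorm_smult[of "-1/2" "Q*Ea*E*Q"] by (smt (verit) norm_ge_zero mult_left_mono)
    then show ?thesis by (simp add: power2_eq_square)
  qed
  define M where "M = Q*H'*Q"
  define T1 where "T1 = Q*Ea*H'*Q"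
  define T2 where "T2 = Q*H'*E*Q"
  define T3 where "T3 = Q*Ea*H'*E*Q"
  have Ua1: "Ua = 1\<^sub>m N + Ea" unfolding Ea_def using dims by (intro eq_matI) auto
  have U1: "U = 1\<^sub>m N + E" unfolding E_def using dims by (intro eq_matI) auto
  have Xsum: "X = M + T1 + T2 + T3"
    unfolding X_def M_def T1_def T2_def T3_def
    using expand4[of Q N Ea H' E] by (simp add: Ua1[symmetric] U1[symmetric])
  have nM: "opnorm M \<le> opnorm X + opnorm T1 + opnorm T2 + opnorm T3"
    by (rule opnorm_sum4[where N=N, OF _ _ _ _ _ Xsum]) (auto simp: M_def T1_def T2_def T3_def)
  have nOff: "opnorm (Qp*H'*Q) \<le> JO'"
  proof -
    have "Qp*H'*Q = adj (Q*H'*Qp)"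
      using adj_mult[of "Q*H'" N N Qp N] adj_mult[of Q N N H' N] Qh Qph H'h
      by (simp add: sq_assoc[where N=N])
    then have "opnorm (Qp*H'*Q) \<le> opnorm (Q*H'*Qp)" using opnorm_adj_le[of "Q*H'*Qp" N N] by simp
    also have "\<dots> \<le> JO'" using JO unfolding Q_def Qp_def .
    finally show ?thesis .
  qed
  have nOff2: "opnorm (Q*H'*Qp) \<le> JO'" using JO unfolding Q_def Qp_def .
  have nT1: "opnorm T1 \<le> \<eta>^2/2 * (J' * 1) + (1 * \<eta>) * JO'"
  proof -
    have "T1 = (Q*Ea)*Q*(H'*Q) + (Q*Ea)*Qp*(H'*Q)"
      unfolding T1_def using expand_mid[of "Q*Ea" N "H'*Q" Q Qp] QQp by (simp add: sq_assoc[where N=N])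
    also have "\<dots> = (Q*Ea*Q)*(H'*Q) + (Q*Ea)*(Qp*H'*Q)" by (simp add: sq_assoc[where N=N])
    finally have e: "T1 = (Q*Ea*Q)*(H'*Q) + (Q*Ea)*(Qp*H'*Q)" .
    have "opnorm T1 \<le> opnorm ((Q*Ea*Q)*(H'*Q)) + opnorm ((Q*Ea)*(Qp*H'*Q))"
      unfolding e by (rule opnorm_add[of _ N N]) auto
    also have "\<dots> \<le> \<eta>^2/2 * (J' * 1) + (1 * \<eta>) * JO'"
      using nD J nQ nEa nOff by (intro add_mono opnorm_mult_le[where N=N]) auto
    finally show ?thesis .
  qed
  have nT2: "opnorm T2 \<le> (1 * J') * (\<eta>^2/2) + JO' * (\<eta> * 1)"
  proof -
    have "T2 = (Q*H')*Q*(E*Q) + (Q*H')*Qp*(E*Q)"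
      unfolding T2_def using expand_mid[of "Q*H'" N "E*Q" Q Qp] QQp by (simp add: sq_assoc[where N=N])
    also have "\<dots> = (Q*H')*(Q*E*Q) + (Q*H'*Qp)*(E*Q)" by (simp add: sq_assoc[where N=N])
    finally have e: "T2 = (Q*H')*(Q*E*Q) + (Q*H'*Qp)*(E*Q)" .
    have "opnorm T2 \<le> opnorm ((Q*H')*(Q*E*Q)) + opnorm ((Q*H'*Qp)*(E*Q))"
      unfolding e by (rule opnorm_add[of _ N N]) auto
    also have "\<dots> \<le> (1 * J') * (\<eta>^2/2) + JO' * (\<eta> * 1)"
      using nD[folded QEQ] J nQ nE nOff2 by (intro add_mono opnorm_mult_le[where N=N]) auto
    finally show ?thesis .
  qed
  have nT3: "opnorm T3 \<le> 1 * \<eta> * J' * \<eta> * 1"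
    unfolding T3_def using nQ nEa J nE by (intro opnorm_mult_le[where N=N]) auto
  have "opnorm M \<le> opnorm H + \<epsilon> + (\<eta>^2/2 * (J' * 1) + (1 * \<eta>) * JO')
      + ((1 * J') * (\<eta>^2/2) + JO' * (\<eta> * 1)) + 1 * \<eta> * J' * \<eta> * 1"
    using nM nX nT1 nT2 nT3 by linarith
  also have "\<dots> = opnorm H + \<epsilon> + 2 * (\<eta> * JO') + 2 * (\<eta>^2 * J')"
    by (simp add: power2_eq_square algebra_simps)
  also have "\<dots> \<le> opnorm H + 2 * (\<epsilon> + \<eta> * JO' + \<eta>^2 * J')"
    using eps0 by simp
  finally show "opnorm (kron (1\<^sub>m n) P * H' * kron (1\<^sub>m n) P) \<le> opnorm H + 2 * (\<epsilon> + \<eta> * JO' + \<eta>^2 * J')"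
    unfolding M_def Q_def .
qed

end
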